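(* Let $(M,d)$ be a bounded metric space such that the family $\mathcal{A}(M)$ of admissible subsets of $M$ is compact and has normal structure, and let $T: M\to M$ be a mapping which diminishes the radius of invariant admissible subsets of $M$. Then $T$ has a fixed point in $M$.
   Context: For $x\in M$ and $K\subseteq M$: $r_x(K)=\sup\{d(x,y):y\in K\}$, $r(K)=\inf\{r_x(K):x\in K\}$, $\delta(K)=\sup\{d(x,y):x,y\in K\}$. A bounded subset $K\subseteq M$ is admissible if it equals the intersection of all closed balls of $M$ containing it; $\mathcal{A}(M)$ denotes the family of admissible subsets. $\mathcal{A}(M)$ is compact if every descending chain of nonempty elements of $\mathcal{A}(M)$ has nonempty intersection. $\mathcal{A}(M)$ has normal structure if $r(K)<\delta(K)$ for every $K\in\mathcal{A}(M)$ with $\delta(K)>0$. $T$ diminishes the radius of invariant admissible subsets if for every $A\in\mathcal{A}(M)$ with $T(A)\subseteq A$, $r_{Tx}(T(A))\le r_x(A)$ for every $x\in M$. *)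

theory Defs
  imports "HOL-Analysis.Analysis"
begin

definition rad_at :: "('a \<Rightarrow> 'a \<Rightarrow> real) \<Rightarrow> 'a \<Rightarrow> 'a set \<Rightarrow> real" where
  "rad_at d x K = Sup {d x y | y. y \<in> K}"

definition cheb_rad :: "('a \<Rightarrow> 'a \<Rightarrow> real) \<Rightarrow> 'a set \<Rightarrow> real" where
  "cheb_rad d K = Inf {rad_at d x K | x. x \<in> K}"

definition diam :: "('a \<Rightarrow> 'a \<Rightarrow> real) \<Rightarrow> 'a set \<Rightarrow> real" where
  "diam d K = Sup {d x y | x y. x \<in> K \<and> y \<in> K}"

definition admissible :: "'a set \<Rightarrow> ('a \<Rightarrow> 'a \<Rightarrow> real) \<Rightarrow> 'a set \<Rightarrow> bool" where
  "admissible M d K \<longleftrightarrow> Metric_space.mbounded M d K \<and>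
     K = M \<inter> \<Inter> {Metric_space.mcball M d x r | x r. x \<in> M \<and> K \<subseteq> Metric_space.mcball M d x r}"

definition adm_compact :: "'a set \<Rightarrow> ('a \<Rightarrow> 'a \<Rightarrow> real) \<Rightarrow> bool" where
  "adm_compact M d \<longleftrightarrow>
     (\<forall>C. C \<noteq> {} \<and> (\<forall>K\<in>C. admissible M d K \<and> K \<noteq> {}) \<and>
          (\<forall>A\<in>C. \<forall>B\<in>C. A \<subseteq> B \<or> B \<subseteq> A) \<longrightarrow> \<Inter>C \<noteq> {})"

definition adm_normal :: "'a set \<Rightarrow> ('a \<Rightarrow> 'a \<Rightarrow> real) \<Rightarrow> bool" where
  "adm_normal M d \<longleftrightarrow>
     (\<forall>K. admissible M d K \<and> diam d K > 0 \<longrightarrow> cheb_rad d K < diam d K)"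

definition diminishes_radius :: "'a set \<Rightarrow> ('a \<Rightarrow> 'a \<Rightarrow> real) \<Rightarrow> ('a \<Rightarrow> 'a) \<Rightarrow> bool" where
  "diminishes_radius M d T \<longleftrightarrow>
     (\<forall>A. admissible M d A \<and> T ` A \<subseteq> A \<longrightarrow>
        (\<forall>x\<in>M. rad_at d (T x) (T ` A) \<le> rad_at d x A))"

end

theory Submission
  imports Defs
begin

lemma Zorn_min:
  assumes ne: "F \<noteq> {}"
    and ch: "\<And>C. C \<noteq> {} \<Longrightarrow> C \<subseteq> F \<Longrightarrow> (\<forall>A\<in>C. \<forall>B\<in>C. A \<subseteq> B \<or> B \<subseteq> A) \<Longrightarrow> \<Inter>C \<in> F"
  shows "\<exists>K\<in>F. \<forall>X\<in>F. X \<subseteq> K \<longrightarrow> X = K"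
proof -
  have "\<forall>C\<in>chains (uminus ` F). \<exists>U\<in>uminus ` F. \<forall>X\<in>C. X \<subseteq> U"
  proof
    fix C assume C: "C \<in> chains (uminus ` F)"
    show "\<exists>U\<in>uminus ` F. \<forall>X\<in>C. X \<subseteq> U"
    proof (cases "C = {}")
      case True then show ?thesis using ne by auto
    next
      case False
      have sub: "uminus ` C \<subseteq> F" using C unfolding chains_def by auto
      have chn: "\<forall>A\<in>uminus ` C. \<forall>B\<in>uminus ` C. A \<subseteq> B \<or> B \<subseteq> A"
        using C unfolding chains_def chain_subset_def by auto
      have "uminus ` C \<noteq> {}" using False by auto
      then have "\<Inter>(uminus ` C) \<in> F" by (rule ch[OF _ sub chn])
      then have "- \<Inter>(uminus ` C) \<in> uminus ` F" by (rule imageI)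
      moreover have "\<forall>X\<in>C. X \<subseteq> - \<Inter>(uminus ` C)" by blast
      ultimately show ?thesis by blast
    qed
  qed
  from Zorn_Lemma2[OF this] obtain N where N: "N \<in> uminus ` F" "\<forall>X\<in>uminus ` F. N \<subseteq> X \<longrightarrow> X = N"
    by blast
  then obtain K where K: "K \<in> F" "N = - K" by auto
  have "\<forall>X\<in>F. X \<subseteq> K \<longrightarrow> X = K"
  proof (intro ballI impI)
    fix X assume "X \<in> F" "X \<subseteq> K"
    then have "- X = N" using N(2) K by auto
    then show "X = K" using K by auto
  qed
  then show ?thesis using K by blast
qed

context Metric_space
begin

lemma adm_iff:
  "admissible M d K \<longleftrightarrow> mbounded K \<and>
     (\<forall>z\<in>M. (\<forall>x r. x \<in> M \<and> K \<subseteq> mcball x r \<longrightarrow> z \<in> mcball x r) \<longrightarrow> z \<in> K)"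
  unfolding admissible_def
  using mbounded_subset_mspace by blast

lemma bound_all:
  assumes "mbounded M"
  obtains D where "\<And>x y. x \<in> M \<Longrightarrow> y \<in> M \<Longrightarrow> d x y \<le> D"
proof -
  obtain c B where cB: "M \<subseteq> mcball c B" using assms unfolding mbounded_def by auto
  have "d x y \<le> 2 * B" if "x \<in> M" "y \<in> M" for x y
  proof -
    have "d x y \<le> d x c + d c y" using triangle that cB by auto
    also have "d x c = d c x" by (rule commute)
    finally have "d x y \<le> d c x + d c y" .
    moreover have "d c x \<le> B" "d c y \<le> B" using cB that by auto
    ultimately show ?thesis by linarith
  qed
  then show ?thesis using that by blast
qed

end

theorem theorem2p2:
  fixes M :: "'a set" and d :: "'a \<Rightarrow> 'a \<Rightarrow> real" and T :: "'a \<Rightarrow> 'a"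
  assumes "Metric_space M d"
    and "M \<noteq> {}"
    and "Metric_space.mbounded M d M"
    and "adm_compact M d"
    and "adm_normal M d"
    and "T ` M \<subseteq> M"
    and "diminishes_radius M d T"
  shows "\<exists>x\<in>M. T x = x"
proof -
  interpret Metric_space M d by fact
  note mb = assms(3)
  obtain D where D: "\<And>x y. x \<in> M \<Longrightarrow> y \<in> M \<Longrightarrow> d x y \<le> D" using bound_all[OF mb] by blast
  define F where "F = {K. admissible M d K \<and> K \<noteq> {} \<and> T ` K \<subseteq> K}"
  have MF: "M \<in> F" unfolding F_def adm_iff using mb assms(2,6) by auto
  have "\<exists>K\<in>F. \<forall>X\<in>F. X \<subseteq> K \<longrightarrow> X = K"
  proof (rule Zorn_min)
    show "F \<noteq> {}" using MF by auto
  next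
    fix C assume C: "C \<noteq> {}" "C \<subseteq> F" "\<forall>A\<in>C. \<forall>B\<in>C. A \<subseteq> B \<or> B \<subseteq> A"
    have ne: "\<Inter>C \<noteq> {}" using assms(4) C unfolding adm_compact_def F_def by blast
    obtain K0 where K0: "K0 \<in> C" using C by auto
    have adm: "admissible M d K" if "K \<in> C" for K using that C unfolding F_def by auto
    have "mbounded (\<Inter>C)"
      using adm[OF K0] K0 unfolding adm_iff by (meson Inter_lower mbounded_subset)
    moreover have "z \<in> \<Inter>C" if "z \<in> M" "\<forall>x r. x \<in> M \<and> \<Inter>C \<subseteq> mcball x r \<longrightarrow> z \<in> mcball x r" for z
    proof
      fix K assume "K \<in> C"
      then show "z \<in> K" using adm[of K] that unfolding adm_iff
        by (meson Inter_lower order_trans)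
    qed
    moreover have "T ` \<Inter>C \<subseteq> \<Inter>C" using C unfolding F_def by blast
    ultimately show "\<Inter>C \<in> F" unfolding F_def adm_iff using ne by auto
  qed
  then obtain K where KF: "K \<in> F" and Kmin: "\<And>X. X \<in> F \<Longrightarrow> X \<subseteq> K \<Longrightarrow> X = K" by blast
  have Kadm: "admissible M d K" and Kne: "K \<noteq> {}" and TK: "T ` K \<subseteq> K" using KF unfolding F_def by auto
  have KM: "K \<subseteq> M" using Kadm unfolding admissible_def by auto
  have Kcl: "\<And>z. z \<in> M \<Longrightarrow> (\<forall>x r. x \<in> M \<and> K \<subseteq> mcball x r \<longrightarrow> z \<in> mcball x r) \<Longrightarrow> z \<in> K"
    using Kadm unfolding adm_iff by blast
  \<comment> \<open>key fact: balls containing T K contain K\<close>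
  define H where "H = {z \<in> M. \<forall>x r. x \<in> M \<and> T ` K \<subseteq> mcball x r \<longrightarrow> z \<in> mcball x r}"
  have TKH: "T ` K \<subseteq> H" unfolding H_def using TK KM by auto
  have HK: "H \<subseteq> K"
  proof
    fix z assume z: "z \<in> H"
    show "z \<in> K"
    proof (rule Kcl)
      show "z \<in> M" using z H_def by auto
      show "\<forall>x r. x \<in> M \<and> K \<subseteq> mcball x r \<longrightarrow> z \<in> mcball x r"
        using z TK unfolding H_def by blast
    qed
  qed
  have "H \<in> F"
  proof -
    have "H \<subseteq> M" unfolding H_def by auto
    then have "mbounded H" using mb by (rule mbounded_subset[rotated])
    moreover have "z \<in> H" if z: "z \<in> M" "\<forall>x r. x \<in> M \<and> H \<subseteq> mcball x r \<longrightarrow> z \<in> mcball x r" for z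
    proof -
      have "z \<in> mcball x r" if "x \<in> M" "T ` K \<subseteq> mcball x r" for x r
      proof -
        have "H \<subseteq> mcball x r" using that unfolding H_def by blast
        then show ?thesis using z that by blast
      qed
      then show ?thesis unfolding H_def using z by blast
    qed
    moreover have "H \<noteq> {}" using TKH Kne by auto
    moreover have "T ` H \<subseteq> H" using HK TKH by auto
    ultimately show ?thesis unfolding F_def adm_iff by auto
  qed
  then have "H = K" using Kmin HK by auto
  have key: "K \<subseteq> mcball x r" if "x \<in> M" "T ` K \<subseteq> mcball x r" for x r
  proof
    fix z assume "z \<in> K"
    then have "z \<in> H" using \<open>H = K\<close> by simp
    then show "z \<in> mcball x r" unfolding H_def using that by blast
  qed
  have radle: "rad_at d x S \<le> r \<longleftrightarrow> (\<forall>y\<in>S. d x y \<le> r)" if "x \<in> M" "S \<subseteq> M" "S \<noteq> {}" for x S r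
  proof -
    have "bdd_above {d x y | y. y \<in> S}" using D that by (auto intro!: bdd_aboveI[of _ D])
    then show ?thesis unfolding rad_at_def using that by (subst cSup_le_iff) auto
  qed
  have diam0: "diam d K \<le> 0"
  proof (rule ccontr)
    assume "\<not> diam d K \<le> 0"
    then have dpos: "diam d K > 0" by simp
    then have cr: "cheb_rad d K < diam d K" using assms(5) Kadm unfolding adm_normal_def by auto
    define r' where "r' = (cheb_rad d K + diam d K) / 2"
    have r1: "cheb_rad d K < r'" and r2: "r' < diam d K" using cr unfolding r'_def by auto
    have "\<exists>x\<in>K. rad_at d x K < r'"
    proof -
      have "bdd_below {rad_at d x K | x. x \<in> K}"
      proof (rule bdd_belowI[of _ 0])
        fix v assume "v \<in> {rad_at d x K | x. x \<in> K}"
        then obtain x where x: "x \<in> K" "v = rad_at d x K" by auto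
        have "bdd_above {d x y | y. y \<in> K}" using D x KM by (auto intro!: bdd_aboveI[of _ D])
        then have "d x x \<le> rad_at d x K" unfolding rad_at_def using x by (intro cSup_upper) auto
        then show "0 \<le> v" using x KM nonneg[of x x] by linarith
      qed
      then show ?thesis using r1 Kne unfolding cheb_rad_def by (subst (asm) cInf_less_iff) auto
    qed
    then obtain x0 where x0: "x0 \<in> K" "rad_at d x0 K < r'" by auto
    define K' where "K' = {z \<in> K. \<forall>y\<in>K. d z y \<le> r'}"
    have x0K': "x0 \<in> K'" using x0 radle[of x0 K r'] KM Kne unfolding K'_def by auto
    have "K' \<in> F"
    proof -
      have "K' \<subseteq> M" unfolding K'_def using KM by auto
      then have "mbounded K'" using mb by (rule mbounded_subset[rotated])
      moreover have "z \<in> K'" if z: "z \<in> M" "\<forall>x r. x \<in> M \<and> K' \<subseteq> mcball x r \<longrightarrow> z \<in> mcball x r" for z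
      proof -
        have "z \<in> K"
        proof (rule Kcl)
          show "z \<in> M" by fact
          show "\<forall>x r. x \<in> M \<and> K \<subseteq> mcball x r \<longrightarrow> z \<in> mcball x r"
          proof (intro allI impI)
            fix x r assume a: "x \<in> M \<and> K \<subseteq> mcball x r"
            then have "K' \<subseteq> mcball x r" unfolding K'_def by blast
            then show "z \<in> mcball x r" using z a by blast
          qed
        qed
        moreover have "d z y \<le> r'" if "y \<in> K" for y
        proof -
          have "K' \<subseteq> mcball y r'" using that KM unfolding K'_def by (auto simp: commute)
          then have "z \<in> mcball y r'" using z that KM by auto
          then show ?thesis by (simp add: commute)
        qed
        ultimately show ?thesis unfolding K'_def by auto
      qed
      moreover have "T ` K' \<subseteq> K'"
      proof
        fix w assume "w \<in> T ` K'"
        then obtain z where z: "z \<in> K'" "w = T z" by auto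
        have zK: "z \<in> K" "z \<in> M" using z KM unfolding K'_def by auto
        have TzM: "T z \<in> M" using zK assms(6) by auto
        have "rad_at d (T z) (T ` K) \<le> rad_at d z K"
          using assms(7) Kadm TK zK unfolding diminishes_radius_def by blast
        also have "rad_at d z K \<le> r'" using radle[of z K r'] zK KM Kne z unfolding K'_def by auto
        finally have "\<forall>y\<in>T ` K. d (T z) y \<le> r'" using radle[of "T z" "T ` K" r'] TzM TK KM Kne by auto
        then have "T ` K \<subseteq> mcball (T z) r'"
        proof (intro subsetI)
          fix w assume b: "\<forall>y\<in>T ` K. d (T z) y \<le> r'" and w: "w \<in> T ` K"
          then have "w \<in> M" using TK KM by blast
          then show "w \<in> mcball (T z) r'" using b w TzM by auto
        qed
        then have "K \<subseteq> mcball (T z) r'" using key TzM by auto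
        then show "w \<in> K'" using z TK zK unfolding K'_def by auto
      qed
      ultimately show ?thesis unfolding F_def adm_iff using x0K' by auto
    qed
    then have "K' = K" using Kmin K'_def by auto
    then have "\<forall>x\<in>K. \<forall>y\<in>K. d x y \<le> r'" unfolding K'_def by auto
    then have "diam d K \<le> r'" unfolding diam_def using Kne by (intro cSup_least) blast+
    then show False using r2 by simp
  qed
  obtain x where x: "x \<in> K" using Kne by auto
  have "T x \<in> K" using x TK by auto
  have "bdd_above {d x y | x y. x \<in> K \<and> y \<in> K}" using D KM by (auto intro!: bdd_aboveI[of _ D])
  then have "d x (T x) \<le> diam d K" unfolding diam_def using x \<open>T x \<in> K\<close> by (intro cSup_upper) auto
  then have "d x (T x) = 0" using diam0 by (meson nonneg order_antisym order_trans)
  moreover have "x \<in> M" "T x \<in> M" using x \<open>T x \<in> K\<close> KM by auto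
  ultimately have "T x = x" using zero[of x "T x"] by simp
  then show ?thesis using x KM by auto
qed

end
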